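(* Let $s,s'\in\mathbb C$, $f\in C_c^{\mathrm{lc}}(G/M)$ and $\gamma\in G$, and set $f_\gamma(gM)=f(\gamma^{-1}gM)$. Then for all $g\in G$, with $(\omega_1,\omega_2)=(g\omega_+,g\omega_-)$, $$(\mathcal R_{s,s'}f_\gamma)(\omega_1,\omega_2)=q^{(\frac12+is)\langle\gamma o,\omega_1\rangle}q^{(\frac12-i\overline{s'})\langle\gamma o,\omega_2\rangle}(\mathcal R_{s,s'}f)(\gamma^{-1}\omega_1,\gamma^{-1}\omega_2),$$ i.e. $(\mathcal R_{s,s'}f_\gamma)(gM\langle\tau\rangle)=q^{(\frac12+is)\langle\gamma o,g\omega_+\rangle}q^{(\frac12-i\overline{s'})\langle\gamma o,g\omega_-\rangle}(\mathcal R_{s,s'}f)(\gamma^{-1}gM\langle\tau\rangle)$.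
   Context: Let $q\ge2$, $\mathfrak G$ the $(q+1)$-regular tree with vertex set $\mathfrak X$, graph distance $d$, boundary $\Omega$ (infinite non-backtracking edge chains modulo eventual equality up to shift). Fix a vertex $o$ and $\omega_-\ne\omega_+$ with $o$ on the geodesic $]\omega_-,\omega_+[$; $\langle x,\omega\rangle=d(o,y)-d(x,y)$ where $[o,\omega)\cap[x,\omega)=[y,\omega)$. $G=\mathrm{Aut}(\mathfrak G)$, $K=\mathrm{Stab}_G(o)$, $B_{\omega_+}=\{g:g\omega_+=\omega_+,\ g\text{ fixes a vertex}\}$, $\tau\in G$ fixes $\omega_\pm$ and translates $]\omega_-,\omega_+[$ one step towards $\omega_+$; $g=kn\tau^j$ ($k\in K,n\in B_{\omega_+}$) with unique $j=:H(g)$. $r\in K$ with $r^2=\mathrm{id}$, $r\tau^jr^{-1}=\tau^{-j}$. $M=\{\gamma\in K:\gamma$ fixes $]\omega_-,\omega_+[$ pointwise$\}$. $G/M\cong\{(\omega,\omega',x):\omega\ne\omega',x\in]\omega,\omega'[\}$ via $gM\mapsto(g\omega_-,g\omega_+,go)$; $C_c^{\mathrm{lc}}(G/M)$ = locally constant compactly supported functions. With $d_{s,s'}(gM)=q^{(\frac12+is)H(g)}q^{(\frac12+is')H(gr)}$, the weighted Radon transform is $(\mathcal R_{s,s'}f)(gM\langle\tau\rangle)=\sum_{j\in\mathbb Z}f(g\tau^jM)d_{s,-\overline{s'}}(g\tau^jM)$; it is regarded as a function on pairs of distinct boundary points via $gM\langle\tau\rangle\leftrightarrow(g\omega_+,g\omega_-)$.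 *)

theory Defs
  imports "HOL-Analysis.Analysis"
begin

definition walk :: "('v \<Rightarrow> 'v \<Rightarrow> bool) \<Rightarrow> (nat \<Rightarrow> 'v) \<Rightarrow> nat \<Rightarrow> bool" where
  "walk E p n \<longleftrightarrow> (\<forall>i<n. E (p i) (p (Suc i)))"

definition nonbacktracking :: "(nat \<Rightarrow> 'v) \<Rightarrow> nat \<Rightarrow> bool" where
  "nonbacktracking p n \<longleftrightarrow> (\<forall>i. i + 2 \<le> n \<longrightarrow> p (i + 2) \<noteq> p i)"

definition regular_tree :: "('v \<Rightarrow> 'v \<Rightarrow> bool) \<Rightarrow> nat \<Rightarrow> bool" where
  "regular_tree E q \<longleftrightarrow>
     (\<forall>x y. E x y \<longrightarrow> E y x) \<and> (\<forall>x. \<not> E x x) \<and>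
     (\<forall>x y. \<exists>p n. p 0 = x \<and> p n = y \<and> walk E p n) \<and>
     (\<forall>p n. n \<ge> 1 \<longrightarrow> walk E p n \<longrightarrow> nonbacktracking p n \<longrightarrow> p 0 \<noteq> p n) \<and>
     (\<forall>x. finite {y. E x y} \<and> card {y. E x y} = q + 1)"

definition tdist :: "('v \<Rightarrow> 'v \<Rightarrow> bool) \<Rightarrow> 'v \<Rightarrow> 'v \<Rightarrow> nat" where
  "tdist E x y = (LEAST n. \<exists>p. p 0 = x \<and> p n = y \<and> walk E p n)"

definition is_ray :: "('v \<Rightarrow> 'v \<Rightarrow> bool) \<Rightarrow> (nat \<Rightarrow> 'v) \<Rightarrow> bool" where
  "is_ray E r \<longleftrightarrow> (\<forall>i. E (r i) (r (Suc i)) \<and> r (i + 2) \<noteq> r i)"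

definition ray_equiv :: "(nat \<Rightarrow> 'v) \<Rightarrow> (nat \<Rightarrow> 'v) \<Rightarrow> bool" where
  "ray_equiv r r' \<longleftrightarrow> (\<exists>k l. \<forall>i. r (i + k) = r' (i + l))"

definition boundary :: "('v \<Rightarrow> 'v \<Rightarrow> bool) \<Rightarrow> (nat \<Rightarrow> 'v) set set" where
  "boundary E = {{r'. is_ray E r' \<and> ray_equiv r r'} | r. is_ray E r}"

definition ray_from :: "'v \<Rightarrow> (nat \<Rightarrow> 'v) set \<Rightarrow> (nat \<Rightarrow> 'v)" where
  "ray_from x \<omega> = (THE r. r \<in> \<omega> \<and> r 0 = x)"

definition confluent :: "'v \<Rightarrow> 'v \<Rightarrow> (nat \<Rightarrow> 'v) set \<Rightarrow> 'v" where
  "confluent o' x \<omega> =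
     (THE y. range (ray_from y \<omega>) = range (ray_from o' \<omega>) \<inter> range (ray_from x \<omega>))"

text \<open>Horocycle bracket \<langle>x, omega\<rangle> = d(o,y) - d(x,y) relative to the base vertex o.\<close>
definition horo :: "('v \<Rightarrow> 'v \<Rightarrow> bool) \<Rightarrow> 'v \<Rightarrow> 'v \<Rightarrow> (nat \<Rightarrow> 'v) set \<Rightarrow> int" where
  "horo E o' x \<omega> = int (tdist E o' (confluent o' x \<omega>)) - int (tdist E x (confluent o' x \<omega>))"

definition geodesic :: "('v \<Rightarrow> 'v \<Rightarrow> bool) \<Rightarrow> (nat \<Rightarrow> 'v) set \<Rightarrow> (nat \<Rightarrow> 'v) set \<Rightarrow> 'v set" where
  "geodesic E \<omega> \<omega>' = {x. \<exists>p :: int \<Rightarrow> 'v.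
      (\<forall>i. E (p i) (p (i + 1)) \<and> p (i + 2) \<noteq> p i) \<and>
      (\<lambda>n. p (int n)) \<in> \<omega>' \<and> (\<lambda>n. p (- int n)) \<in> \<omega> \<and> x \<in> range p}"

definition Aut :: "('v \<Rightarrow> 'v \<Rightarrow> bool) \<Rightarrow> ('v \<Rightarrow> 'v) set" where
  "Aut E = {g. bij g \<and> (\<forall>x y. E x y \<longleftrightarrow> E (g x) (g y))}"

definition bact :: "('v \<Rightarrow> 'v) \<Rightarrow> (nat \<Rightarrow> 'v) set \<Rightarrow> (nat \<Rightarrow> 'v) set" where
  "bact g \<omega> = (\<lambda>r. g \<circ> r) ` \<omega>"

definition ipow :: "('v \<Rightarrow> 'v) \<Rightarrow> int \<Rightarrow> ('v \<Rightarrow> 'v)" where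
  "ipow t j = (if 0 \<le> j then t ^^ nat j else inv t ^^ nat (- j))"

definition Kgrp :: "('v \<Rightarrow> 'v \<Rightarrow> bool) \<Rightarrow> 'v \<Rightarrow> ('v \<Rightarrow> 'v) set" where
  "Kgrp E o' = {g \<in> Aut E. g o' = o'}"

definition Bgrp :: "('v \<Rightarrow> 'v \<Rightarrow> bool) \<Rightarrow> (nat \<Rightarrow> 'v) set \<Rightarrow> ('v \<Rightarrow> 'v) set" where
  "Bgrp E \<omega>p = {g \<in> Aut E. bact g \<omega>p = \<omega>p \<and> (\<exists>x. g x = x)}"

definition Hfun :: "('v \<Rightarrow> 'v \<Rightarrow> bool) \<Rightarrow> 'v \<Rightarrow> (nat \<Rightarrow> 'v) set \<Rightarrow> ('v \<Rightarrow> 'v) \<Rightarrow> ('v \<Rightarrow> 'v) \<Rightarrow> int" where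
  "Hfun E o' \<omega>p t g = (THE j. \<exists>k \<in> Kgrp E o'. \<exists>n \<in> Bgrp E \<omega>p. g = k \<circ> n \<circ> ipow t j)"

definition Mgrp :: "('v \<Rightarrow> 'v \<Rightarrow> bool) \<Rightarrow> 'v \<Rightarrow> (nat \<Rightarrow> 'v) set \<Rightarrow> (nat \<Rightarrow> 'v) set \<Rightarrow> ('v \<Rightarrow> 'v) set" where
  "Mgrp E o' \<omega>m \<omega>p = {g \<in> Kgrp E o'. \<forall>x \<in> geodesic E \<omega>m \<omega>p. g x = x}"

definition standard_setting ::
  "nat \<Rightarrow> ('v \<Rightarrow> 'v \<Rightarrow> bool) \<Rightarrow> 'v \<Rightarrow> (nat \<Rightarrow> 'v) set \<Rightarrow> (nat \<Rightarrow> 'v) set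
     \<Rightarrow> ('v \<Rightarrow> 'v) \<Rightarrow> ('v \<Rightarrow> 'v) \<Rightarrow> bool" where
  "standard_setting q E o' \<omega>m \<omega>p t r \<longleftrightarrow>
     q \<ge> 2 \<and> regular_tree E q \<and>
     \<omega>m \<in> boundary E \<and> \<omega>p \<in> boundary E \<and> \<omega>m \<noteq> \<omega>p \<and> o' \<in> geodesic E \<omega>m \<omega>p \<and>
     t \<in> Aut E \<and> bact t \<omega>m = \<omega>m \<and> bact t \<omega>p = \<omega>p \<and>
     (\<forall>x \<in> geodesic E \<omega>m \<omega>p. E x (t x) \<and> t x \<in> range (ray_from x \<omega>p)) \<and>
     r \<in> Kgrp E o' \<and> r \<circ> r = id \<and> (\<forall>j. r \<circ> ipow t j \<circ> inv r = ipow t (- j))"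

definition cosetM :: "('v \<Rightarrow> 'v) set \<Rightarrow> ('v \<Rightarrow> 'v) \<Rightarrow> ('v \<Rightarrow> 'v) set" where
  "cosetM M g = (\<lambda>m. g \<circ> m) ` M"

definition Gtop :: "('v \<Rightarrow> 'v \<Rightarrow> bool) \<Rightarrow> ('v \<Rightarrow> 'v) topology" where
  "Gtop E = subtopology (product_topology (\<lambda>_. discrete_topology UNIV) UNIV) (Aut E)"

definition qtop :: "'a topology \<Rightarrow> ('a \<Rightarrow> 'b) \<Rightarrow> 'b set \<Rightarrow> 'b topology" where
  "qtop X p Y = topology (\<lambda>U. U \<subseteq> Y \<and> openin X {x \<in> topspace X. p x \<in> U})"

lemma istopology_qtop: "istopology (\<lambda>U. U \<subseteq> Y \<and> openin X {x \<in> topspace X. p x \<in> U})"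
proof -
  have 1: "openin X {x \<in> topspace X. p x \<in> S \<inter> T}"
    if "openin X {x \<in> topspace X. p x \<in> S}" "openin X {x \<in> topspace X. p x \<in> T}" for S T
  proof -
    have "{x \<in> topspace X. p x \<in> S \<inter> T} =
          {x \<in> topspace X. p x \<in> S} \<inter> {x \<in> topspace X. p x \<in> T}" by blast
    then show ?thesis using that by auto
  qed
  have 2: "openin X {x \<in> topspace X. p x \<in> \<Union>\<K>}"
    if "\<forall>K\<in>\<K>. openin X {x \<in> topspace X. p x \<in> K}" for \<K>
  proof -
    have "{x \<in> topspace X. p x \<in> \<Union>\<K>} = (\<Union>K\<in>\<K>. {x \<in> topspace X. p x \<in> K})" by blast
    then show ?thesis using that by auto
  qed
  show ?thesis unfolding istopology_def using 1 2 by blast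
qed

definition GM :: "('v \<Rightarrow> 'v \<Rightarrow> bool) \<Rightarrow> ('v \<Rightarrow> 'v) set \<Rightarrow> ('v \<Rightarrow> 'v) set set" where
  "GM E M = cosetM M ` Aut E"

definition GMtop :: "('v \<Rightarrow> 'v \<Rightarrow> bool) \<Rightarrow> ('v \<Rightarrow> 'v) set \<Rightarrow> ('v \<Rightarrow> 'v) set topology" where
  "GMtop E M = qtop (Gtop E) (cosetM M) (GM E M)"

definition Cclc :: "('v \<Rightarrow> 'v \<Rightarrow> bool) \<Rightarrow> ('v \<Rightarrow> 'v) set \<Rightarrow> (('v \<Rightarrow> 'v) set \<Rightarrow> complex) set" where
  "Cclc E M = {f. (\<forall>c \<in> GM E M. \<exists>U. openin (GMtop E M) U \<and> c \<in> U \<and> (\<forall>c' \<in> U. f c' = f c)) \<and>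
                 compactin (GMtop E M) ((GMtop E M) closure_of {c \<in> GM E M. f c \<noteq> 0})}"

definition ltrans :: "('v \<Rightarrow> 'v) \<Rightarrow> (('v \<Rightarrow> 'v) set \<Rightarrow> complex) \<Rightarrow> (('v \<Rightarrow> 'v) set \<Rightarrow> complex)" where
  "ltrans \<gamma> f = (\<lambda>c. f ((\<lambda>h. inv \<gamma> \<circ> h) ` c))"

definition dfun :: "nat \<Rightarrow> ('v \<Rightarrow> 'v \<Rightarrow> bool) \<Rightarrow> 'v \<Rightarrow> (nat \<Rightarrow> 'v) set \<Rightarrow> ('v \<Rightarrow> 'v) \<Rightarrow> ('v \<Rightarrow> 'v)
     \<Rightarrow> complex \<Rightarrow> complex \<Rightarrow> ('v \<Rightarrow> 'v) \<Rightarrow> complex" where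
  "dfun q E o' \<omega>p t r s s' g =
     complex_of_real (real q) powr ((1/2 + \<i> * s) * of_int (Hfun E o' \<omega>p t g)) *
     complex_of_real (real q) powr ((1/2 + \<i> * s') * of_int (Hfun E o' \<omega>p t (g \<circ> r)))"

text \<open>(R_{s,s'} f)(gM<tau>) = sum_j f(g tau^j M) d_{s,-conj s'}(g tau^j M), as a function of g.\<close>
definition radon :: "nat \<Rightarrow> ('v \<Rightarrow> 'v \<Rightarrow> bool) \<Rightarrow> 'v \<Rightarrow> (nat \<Rightarrow> 'v) set \<Rightarrow> (nat \<Rightarrow> 'v) set
     \<Rightarrow> ('v \<Rightarrow> 'v) \<Rightarrow> ('v \<Rightarrow> 'v) \<Rightarrow> complex \<Rightarrow> complex \<Rightarrow> (('v \<Rightarrow> 'v) set \<Rightarrow> complex)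
     \<Rightarrow> ('v \<Rightarrow> 'v) \<Rightarrow> complex" where
  "radon q E o' \<omega>m \<omega>p t r s s' f g =
     (\<Sum>\<^sub>\<infinity> j::int. f (cosetM (Mgrp E o' \<omega>m \<omega>p) (g \<circ> ipow t j)) *
                   dfun q E o' \<omega>p t r s (- cnj s') (g \<circ> ipow t j))"

end

theory Submission
  imports Defs
begin

locale tree =
  fixes E :: "'v \<Rightarrow> 'v \<Rightarrow> bool" and q :: nat
  assumes RT: "regular_tree E q"
begin

lemma symE: "E x y \<Longrightarrow> E y x" using RT unfolding regular_tree_def by blast
lemma irrE: "\<not> E x x" using RT unfolding regular_tree_def by blast
lemma conn: "\<exists>p n. p 0 = x \<and> p n = y \<and> walk E p n" using RT unfolding regular_tree_def by blast
lemma acyc: "n \<ge> 1 \<Longrightarrow> walk E p n \<Longrightarrow> nonbacktracking p n \<Longrightarrow> p 0 \<noteq> p n"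
  using RT unfolding regular_tree_def by blast
lemma deg: "finite {y. E x y}" "card {y. E x y} = q + 1" using RT unfolding regular_tree_def by blast+

definition nbw :: "(nat \<Rightarrow> 'v) \<Rightarrow> nat \<Rightarrow> bool" where
  "nbw p n \<longleftrightarrow> walk E p n \<and> nonbacktracking p n"

lemma nbw_shift: "nbw p (Suc n) \<Longrightarrow> nbw (\<lambda>i. p (Suc i)) n"
  unfolding nbw_def walk_def nonbacktracking_def by auto

lemma nbw_closed: "nbw p n \<Longrightarrow> p 0 = p n \<Longrightarrow> n = 0"
  using acyc[of n p] unfolding nbw_def by (cases "n = 0") auto

lemma nb_unique:
  "nbw p n \<Longrightarrow> nbw p' m \<Longrightarrow> p 0 = p' 0 \<Longrightarrow> p n = p' m \<Longrightarrow> n = m \<and> (\<forall>i\<le>n. p i = p' i)"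
proof (induction n arbitrary: p p' m)
  case 0
  then have "m = 0" using nbw_closed[of p' m] by simp
  then show ?case using 0 by simp
next
  case (Suc n)
  show ?case
  proof (cases m)
    case 0
    then show ?thesis using Suc.prems nbw_closed[of p "Suc n"] by simp
  next
    case (Suc m')
    show ?thesis
    proof (cases "p 1 = p' 1")
      case True
      have "n = m' \<and> (\<forall>i\<le>n. p (Suc i) = p' (Suc i))"
        using Suc.IH[of "\<lambda>i. p (Suc i)" "\<lambda>i. p' (Suc i)" m'] Suc.prems True \<open>m = Suc m'\<close>
          nbw_shift by auto
      then show ?thesis using Suc.prems \<open>m = Suc m'\<close>
        by (metis Suc_le_D Suc_le_mono le0 le_zero_eq not0_implies_Suc)
    next
      case False
      define w where "w i = (if i \<le> m then p' (m - i) else p (i - m))" for i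
      have W: "nbw w (m + Suc n)"
        unfolding nbw_def walk_def nonbacktracking_def
      proof (intro conjI allI impI)
        fix i assume i: "i < m + Suc n"
        show "E (w i) (w (Suc i))"
        proof (cases "i < m")
          case True
          then have "E (p' (m - Suc i)) (p' (Suc (m - Suc i)))"
            using Suc.prems(2) unfolding nbw_def walk_def by auto
          then show ?thesis using True unfolding w_def
            by (auto intro: symE simp: Suc_diff_Suc)
        next
          case False
          then have "E (p (i - m)) (p (Suc (i - m)))"
            using Suc.prems(1) i unfolding nbw_def walk_def by auto
          then show ?thesis using False Suc.prems(3) unfolding w_def
            by (auto simp: Suc_diff_le)
        qed
      next
        fix i assume i: "i + 2 \<le> m + Suc n"
        show "w (i + 2) \<noteq> w i"
        proof (cases "i + 2 \<le> m")
          case True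
          have "p' ((m - (i+2)) + 2) \<noteq> p' (m - (i+2))"
            using Suc.prems(2) True unfolding nbw_def nonbacktracking_def by auto
          moreover have "(m - (i+2)) + 2 = m - i" using True by simp
          ultimately show ?thesis using True unfolding w_def by auto
        next
          case F: False
          show ?thesis
          proof (cases "i + 1 = m")
            case True
            then have "w (i+2) = p 1" "w i = p' 1" unfolding w_def by auto
            then show ?thesis using False by simp
          next
            case False
            then have "m \<le> i" using F by simp
            then have "p ((i - m) + 2) \<noteq> p (i - m)"
              using Suc.prems(1) i unfolding nbw_def nonbacktracking_def by auto
            moreover have "(i - m) + 2 = i + 2 - m" using \<open>m \<le> i\<close> by simp
            ultimately show ?thesis using \<open>m \<le> i\<close> F Suc.prems(3) unfolding w_def by auto
          qed
        qed
      qed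
      have "w 0 = w (m + Suc n)" unfolding w_def using Suc.prems(4) by simp
      then have False using nbw_closed[OF W] by simp
      then show ?thesis ..
    qed
  qed
qed


lemma exists_nbw: "\<exists>p. p 0 = x \<and> p (tdist E x y) = y \<and> nbw p (tdist E x y)"
proof -
  define P where "P n = (\<exists>p. p 0 = x \<and> p n = y \<and> walk E p n)" for n
  have ex: "\<exists>n. P n" using conn unfolding P_def by blast
  have td: "tdist E x y = (LEAST n. P n)" unfolding tdist_def P_def by simp
  define d where "d = tdist E x y"
  have "P d" using LeastI_ex[OF ex] td d_def by simp
  then obtain p where p: "p 0 = x" "p d = y" "walk E p d" unfolding P_def by blast
  have min: "\<And>n. n < d \<Longrightarrow> \<not> P n" using not_less_Least td d_def by metis
  have "nonbacktracking p d"
    unfolding nonbacktracking_def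
  proof (intro allI impI notI)
    fix i assume i: "i + 2 \<le> d" and eq: "p (i + 2) = p i"
    define p' where "p' j = (if j \<le> i then p j else p (j + 2))" for j
    have "walk E p' (d - 2)" unfolding walk_def
    proof (intro allI impI)
      fix j assume j: "j < d - 2"
      show "E (p' j) (p' (Suc j))"
      proof (cases "j < i")
        case True then show ?thesis using p(3) j unfolding p'_def walk_def by auto
      next
        case False
        then have "E (p (j+2)) (p (Suc (j+2)))" using p(3) j unfolding walk_def by auto
        then show ?thesis using False eq unfolding p'_def by (cases "j = i") auto
      qed
    qed
    moreover have "p' 0 = x" using p unfolding p'_def by simp
    moreover have "p' (d - 2) = y"
    proof (cases "d - 2 \<le> i")
      case True
      then have "i = d - 2" using i by linarith
      moreover have "i + 2 = d" using i True by linarith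
      ultimately have "p (d - 2) = p d" using eq by simp
      then show ?thesis using p True unfolding p'_def by simp
    next
      case False
      have "d - 2 + 2 = d" using i by simp
      then show ?thesis using p False unfolding p'_def by simp
    qed
    ultimately have "P (d - 2)" unfolding P_def by blast
    moreover have "d - 2 < d" using i by simp
    ultimately show False using min by blast
  qed
  then show ?thesis using p d_def nbw_def by blast
qed

lemma tdist_nbw: "nbw p n \<Longrightarrow> tdist E (p 0) (p n) = n"
  using exists_nbw[of "p 0" "p n"] nb_unique by metis

lemma nbw_sub: "nbw p n \<Longrightarrow> i \<le> j \<Longrightarrow> j \<le> n \<Longrightarrow> nbw (\<lambda>k. p (i + k)) (j - i)"
  unfolding nbw_def walk_def nonbacktracking_def
  by (auto simp: add.assoc[symmetric])

lemma ray_nbw: "is_ray E r \<Longrightarrow> nbw (\<lambda>k. r (i + k)) n"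
  unfolding is_ray_def nbw_def walk_def nonbacktracking_def
  by (metis add.commute add_Suc_right add.left_commute)

lemma ray_tdist: "is_ray E r \<Longrightarrow> tdist E (r i) (r (i + n)) = n"
  using tdist_nbw[OF ray_nbw[of r i n]] by simp

lemma ray_tdist0: "is_ray E r \<Longrightarrow> tdist E (r 0) (r n) = n"
  using ray_tdist[of r 0 n] by simp

lemma ray_inj: "is_ray E r \<Longrightarrow> inj r"
proof (rule injI)
  fix i j assume r: "is_ray E r" and eq: "r i = r j"
  show "i = j"
  proof (rule ccontr)
    assume "i \<noteq> j"
    then consider "i < j" | "j < i" by linarith
    then show False
    proof cases
      case 1
      then have "tdist E (r i) (r (i + (j - i))) = j - i" using ray_tdist[OF r] by blast
      moreover have "tdist E (r i) (r i) = 0" using ray_tdist[OF r, of i 0] by simp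
      ultimately show False using eq 1 by simp
    next
      case 2
      then have "tdist E (r j) (r (j + (i - j))) = i - j" using ray_tdist[OF r] by blast
      moreover have "tdist E (r j) (r j) = 0" using ray_tdist[OF r, of j 0] by simp
      ultimately show False using eq 2 by simp
    qed
  qed
qed

lemma ray_shift: "is_ray E r \<Longrightarrow> is_ray E (\<lambda>i. r (i + n))"
  unfolding is_ray_def by (metis add.commute add_Suc_right add.left_commute)

lemma equiv_refl: "ray_equiv r r" unfolding ray_equiv_def by (rule exI[of _ 0], rule exI[of _ 0]) simp
lemma equiv_sym: "ray_equiv r r' \<Longrightarrow> ray_equiv r' r" unfolding ray_equiv_def by metis
lemma equiv_trans: "ray_equiv r r' \<Longrightarrow> ray_equiv r' r'' \<Longrightarrow> ray_equiv r r''"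
  unfolding ray_equiv_def
proof (elim exE)
  fix k l k' l' assume A: "\<forall>i. r (i + k) = r' (i + l)" and B: "\<forall>i. r' (i + k') = r'' (i + l')"
  have "\<forall>i. r (i + (k + k')) = r'' (i + (l + l'))"
  proof
    fix i
    have "r (i + (k + k')) = r' ((i + k') + l)" using A[rule_format, of "i + k'"] by (simp add: ac_simps)
    also have "\<dots> = r'' ((i + l) + l')" using B[rule_format, of "i + l"] by (simp add: ac_simps)
    finally show "r (i + (k + k')) = r'' (i + (l + l'))" by (simp add: ac_simps)
  qed
  then show "\<exists>k l. \<forall>i. r (i + k) = r'' (i + l)" by blast
qed
lemma equiv_shift: "ray_equiv r (\<lambda>i. r (i + n))"
  unfolding ray_equiv_def by (rule exI[of _ n], rule exI[of _ 0], simp)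

definition cls where "cls r = {r'. is_ray E r' \<and> ray_equiv r r'}"

lemma bd_cls: "\<omega> \<in> boundary E \<Longrightarrow> \<exists>r. is_ray E r \<and> \<omega> = cls r"
  unfolding boundary_def cls_def by blast
lemma cls_bd: "is_ray E r \<Longrightarrow> cls r \<in> boundary E"
  unfolding boundary_def cls_def by blast
lemma bd_ray: "\<omega> \<in> boundary E \<Longrightarrow> \<rho> \<in> \<omega> \<Longrightarrow> is_ray E \<rho>"
  using bd_cls cls_def by blast
lemma bd_eq_cls: assumes "\<omega> \<in> boundary E" "\<rho> \<in> \<omega>" shows "\<omega> = cls \<rho>"
proof -
  obtain r where r: "is_ray E r" "\<omega> = cls r" using bd_cls assms(1) by blast
  then have "ray_equiv r \<rho>" using assms(2) cls_def by blast
  then have "\<And>x. ray_equiv r x \<longleftrightarrow> ray_equiv \<rho> x" using equiv_trans[of r \<rho>] equiv_trans[of \<rho> r] equiv_sym by blast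
  then show ?thesis using r(2) unfolding cls_def by blast
qed
lemma bd_equiv: "\<omega> \<in> boundary E \<Longrightarrow> \<rho> \<in> \<omega> \<Longrightarrow> \<rho>' \<in> \<omega> \<Longrightarrow> ray_equiv \<rho> \<rho>'"
  using bd_eq_cls cls_def by blast
lemma bd_mem: "\<omega> \<in> boundary E \<Longrightarrow> \<rho> \<in> \<omega> \<Longrightarrow> is_ray E \<rho>' \<Longrightarrow> ray_equiv \<rho> \<rho>' \<Longrightarrow> \<rho>' \<in> \<omega>"
  using bd_eq_cls cls_def by blast
lemma bd_inter: "\<omega> \<in> boundary E \<Longrightarrow> \<omega>' \<in> boundary E \<Longrightarrow> \<rho> \<in> \<omega> \<Longrightarrow> \<rho> \<in> \<omega>' \<Longrightarrow> \<omega> = \<omega>'"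
  using bd_eq_cls by metis
lemma bd_shift: "\<omega> \<in> boundary E \<Longrightarrow> \<rho> \<in> \<omega> \<Longrightarrow> (\<lambda>i. \<rho> (i + n)) \<in> \<omega>"
  using bd_mem bd_ray ray_shift equiv_shift by blast

lemma ray_unique:
  assumes w: "\<omega> \<in> boundary E" and r: "\<rho> \<in> \<omega>" "\<rho>' \<in> \<omega>" and s: "\<rho> 0 = \<rho>' 0"
  shows "\<rho> = \<rho>'"
proof -
  obtain k l where kl: "\<forall>i. \<rho> (i + k) = \<rho>' (i + l)"
    using bd_equiv[OF w r] unfolding ray_equiv_def by blast
  have R: "is_ray E \<rho>" "is_ray E \<rho>'" using bd_ray w r by auto
  have "nbw \<rho> k" "nbw \<rho>' l" using ray_nbw[OF R(1), of 0] ray_nbw[OF R(2), of 0] by auto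
  moreover have "\<rho> k = \<rho>' l" using kl[rule_format, of 0] by simp
  ultimately have kl2: "k = l \<and> (\<forall>i\<le>k. \<rho> i = \<rho>' i)" using nb_unique s by blast
  show ?thesis
  proof
    fix i show "\<rho> i = \<rho>' i"
    proof (cases "i \<le> k")
      case True then show ?thesis using kl2 by blast
    next
      case False
      then show ?thesis using kl[rule_format, of "i - k"] kl2 by simp
    qed
  qed
qed

lemma ray_exists:
  assumes w: "\<omega> \<in> boundary E"
  shows "\<exists>\<rho>\<in>\<omega>. \<rho> 0 = x"
proof -
  obtain a where a: "is_ray E a" "\<omega> = cls a" using bd_cls[OF w] by blast
  have aw: "a \<in> \<omega>" using a equiv_refl cls_def by blast
  define d0 where "d0 = (LEAST d. \<exists>j. tdist E x (a j) = d)"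
  have "\<exists>j. tdist E x (a j) = d0" unfolding d0_def by (rule LeastI_ex) blast
  then obtain j where j: "tdist E x (a j) = d0" by blast
  have mn: "\<And>j'. d0 \<le> tdist E x (a j')" unfolding d0_def by (rule Least_le) blast
  obtain w where wp: "w 0 = x" "w d0 = a j" "nbw w d0" using exists_nbw[of x "a j"] j by metis
  define \<rho> where "\<rho> i = (if i \<le> d0 then w i else a (j + i - d0))" for i
  have ray: "is_ray E \<rho>" unfolding is_ray_def
  proof (intro allI conjI)
    fix i
    show "E (\<rho> i) (\<rho> (Suc i))"
    proof (cases "i < d0")
      case True then show ?thesis using wp(3) unfolding \<rho>_def nbw_def walk_def by auto
    next
      case False
      have "E (a (j + i - d0)) (a (Suc (j + i - d0)))" using a(1) unfolding is_ray_def by blast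
      then show ?thesis using False wp(2) unfolding \<rho>_def by (auto simp: Suc_diff_le)
    qed
    show "\<rho> (i + 2) \<noteq> \<rho> i"
    proof (cases "i + 2 \<le> d0")
      case True then show ?thesis using wp(3) unfolding \<rho>_def nbw_def nonbacktracking_def by auto
    next
      case F: False
      show ?thesis
      proof (cases "i + 1 = d0")
        case True
        have r2: "\<rho> (i + 2) = a (j + 1)" "\<rho> i = w i" using True unfolding \<rho>_def by auto
        show ?thesis
        proof
          assume "\<rho> (i + 2) = \<rho> i"
          then have "w i = a (j + 1)" using r2 by simp
          then have "tdist E x (a (j+1)) = i" using tdist_nbw[OF nbw_sub[OF wp(3), of 0 i]] wp(1) True by simp
          then show False using mn[of "j+1"] True by simp
        qed
      next
        case False
        then have "d0 \<le> i" using F by simp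
        have "a ((j + i - d0) + 2) \<noteq> a (j + i - d0)" using a(1) unfolding is_ray_def by blast
        moreover have "(j + i - d0) + 2 = j + (i + 2) - d0" using \<open>d0 \<le> i\<close> by simp
        moreover have "\<rho> (i+2) = a (j + (i + 2) - d0)" using \<open>d0 \<le> i\<close> unfolding \<rho>_def by simp
        moreover have "\<rho> i = a (j + i - d0)" using \<open>d0 \<le> i\<close> wp(2) unfolding \<rho>_def by auto
        ultimately show ?thesis by simp
      qed
    qed
  qed
  have "ray_equiv a \<rho>" unfolding ray_equiv_def
    by (rule exI[of _ j], rule exI[of _ d0]) (auto simp: \<rho>_def wp(2) add.commute)
  then have "\<rho> \<in> \<omega>" using bd_mem[OF w aw ray] by blast
  moreover have "\<rho> 0 = x" using wp(1) unfolding \<rho>_def by simp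
  ultimately show ?thesis by blast
qed

lemma ray_from:
  assumes w: "\<omega> \<in> boundary E"
  shows "ray_from x \<omega> \<in> \<omega>" "ray_from x \<omega> 0 = x" "is_ray E (ray_from x \<omega>)"
proof -
  obtain \<rho> where r: "\<rho> \<in> \<omega>" "\<rho> 0 = x" using ray_exists[OF w] by blast
  have "ray_from x \<omega> = \<rho>" unfolding ray_from_def
    using r ray_unique[OF w] by (intro the_equality) auto
  then show "ray_from x \<omega> \<in> \<omega>" "ray_from x \<omega> 0 = x" "is_ray E (ray_from x \<omega>)"
    using r bd_ray[OF w] by auto
qed

lemma ray_from_eq: "\<omega> \<in> boundary E \<Longrightarrow> \<rho> \<in> \<omega> \<Longrightarrow> \<rho> 0 = x \<Longrightarrow> ray_from x \<omega> = \<rho>"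
  using ray_from ray_unique by metis

lemma ray_from_shift: "\<omega> \<in> boundary E \<Longrightarrow> \<rho> \<in> \<omega> \<Longrightarrow> ray_from (\<rho> n) \<omega> = (\<lambda>i. \<rho> (i + n))"
  using ray_from_eq bd_shift by simp

end

context tree begin

lemma rf_range_inj:
  assumes w: "\<omega> \<in> boundary E" and eq: "range (ray_from y \<omega>) = range (ray_from y' \<omega>)"
  shows "y = y'"
proof -
  let ?r = "ray_from y \<omega>" and ?r' = "ray_from y' \<omega>"
  have "y \<in> range ?r" using ray_from(2)[OF w, of y] by (metis rangeI)
  then obtain n where n: "y = ?r' n" using eq by auto
  have sh: "?r = (\<lambda>i. ?r' (i + n))" using ray_from_shift[OF w ray_from(1)[OF w, of y'], of n] n by simp
  have "y' \<in> range ?r" using ray_from(2)[OF w, of y'] eq by (metis rangeI)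
  then obtain m where "y' = ?r m" by auto
  then have "?r' 0 = ?r' (m + n)" using sh ray_from(2)[OF w, of y'] by simp
  then have "m + n = 0" using ray_inj[OF ray_from(3)[OF w, of y']] by (metis injD)
  then show ?thesis using n ray_from(2)[OF w, of y'] by simp
qed

lemma horo_eq:
  assumes w: "\<omega> \<in> boundary E" and kl: "\<forall>i. ray_from o' \<omega> (i + k) = ray_from x \<omega> (i + l)"
  shows "horo E o' x \<omega> = int k - int l"
proof -
  define a where "a = ray_from o' \<omega>"
  define b where "b = ray_from x \<omega>"
  have A: "a \<in> \<omega>" "a 0 = o'" "is_ray E a" using ray_from[OF w] a_def by auto
  have B: "b \<in> \<omega>" "b 0 = x" "is_ray E b" using ray_from[OF w] b_def by auto
  define P where "P k' = (\<exists>l'. \<forall>i. a (i + k') = b (i + l'))" for k'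
  have Pk: "P k" using kl unfolding P_def a_def b_def by blast
  define k0 where "k0 = (LEAST k'. P k')"
  have "P k0" using LeastI[of P, OF Pk] k0_def by simp
  then obtain l0 where l0: "\<forall>i. a (i + k0) = b (i + l0)" unfolding P_def by blast
  have k0k: "k0 \<le> k" using Least_le[of P, OF Pk] k0_def by simp
  have rs: "ray_from (a k0) \<omega> = (\<lambda>i. a (i + k0))" using ray_from_shift[OF w A(1)] by simp
  have C: "range (ray_from (a k0) \<omega>) = range a \<inter> range b"
  proof
    show "range (ray_from (a k0) \<omega>) \<subseteq> range a \<inter> range b"
    proof
      fix z assume "z \<in> range (ray_from (a k0) \<omega>)"
      then obtain i where "z = a (i + k0)" using rs by auto
      then show "z \<in> range a \<inter> range b" using l0 by (metis IntI rangeI)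
    qed
    show "range a \<inter> range b \<subseteq> range (ray_from (a k0) \<omega>)"
    proof
      fix z assume "z \<in> range a \<inter> range b"
      then obtain m m' where z: "z = a m" "z = b m'" by (meson IntD1 IntD2 rangeE)
      show "z \<in> range (ray_from (a k0) \<omega>)"
      proof (cases "k0 \<le> m")
        case True
        then have "z = a ((m - k0) + k0)" using z by simp
        then show ?thesis using rs by auto
      next
        case False
        have "ray_from z \<omega> = (\<lambda>i. a (i + m))" using ray_from_shift[OF w A(1)] z by simp
        moreover have "ray_from z \<omega> = (\<lambda>i. b (i + m'))" using ray_from_shift[OF w B(1), of m'] z(2) by simp
        ultimately have "P m" unfolding P_def by metis
        then show ?thesis using False not_less_Least k0_def by (metis not_le)
      qed
    qed
  qed
  have conf: "confluent o' x \<omega> = a k0"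
    unfolding confluent_def
  proof (rule the_equality)
    show "range (ray_from (a k0) \<omega>) = range (ray_from o' \<omega>) \<inter> range (ray_from x \<omega>)"
      using C a_def b_def by simp
    fix y assume "range (ray_from y \<omega>) = range (ray_from o' \<omega>) \<inter> range (ray_from x \<omega>)"
    then show "y = a k0" using rf_range_inj[OF w, of y "a k0"] C a_def b_def by simp
  qed
  have d1: "tdist E o' (a k0) = k0" using ray_tdist0[OF A(3), of k0] A(2) by simp
  have d2: "tdist E x (a k0) = l0" using ray_tdist0[OF B(3), of l0] B(2) l0 by (metis add_0)
  have "a k = b ((k - k0) + l0)" using l0[rule_format, of "k - k0"] k0k by simp
  moreover have "a k = b l" using kl a_def b_def by (metis add_0)
  ultimately have "l = (k - k0) + l0" using ray_inj[OF B(3)] by (metis injD)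
  then show ?thesis unfolding horo_def conf d1 d2 using k0k by simp
qed

lemma horo_self: "\<omega> \<in> boundary E \<Longrightarrow> horo E o' o' \<omega> = 0"
  using horo_eq[where \<omega>=\<omega> and o'=o' and x=o' and k=0 and l=0] by simp

lemma horo_ray: "\<omega> \<in> boundary E \<Longrightarrow> horo E o' (ray_from o' \<omega> n) \<omega> = int n"
  using horo_eq[where \<omega>=\<omega> and o'=o' and x="ray_from o' \<omega> n" and k=n and l=0]
    ray_from_shift[OF _ ray_from(1)] by simp

lemma aut_E: "g \<in> Aut E \<Longrightarrow> E x y \<longleftrightarrow> E (g x) (g y)" unfolding Aut_def by blast
lemma aut_bij: "g \<in> Aut E \<Longrightarrow> bij g" unfolding Aut_def by blast
lemma aut_inv: assumes "g \<in> Aut E" shows "inv g \<in> Aut E"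
proof -
  have b: "bij g" using assms unfolding Aut_def by blast
  have "E x y \<longleftrightarrow> E (inv g x) (inv g y)" for x y
    using aut_E[OF assms, of "inv g x" "inv g y"] bij_is_surj[OF b] by (simp add: surj_f_inv_f)
  then show ?thesis unfolding Aut_def using bij_imp_bij_inv[OF b] by blast
qed
lemma aut_comp: "g \<in> Aut E \<Longrightarrow> h \<in> Aut E \<Longrightarrow> g \<circ> h \<in> Aut E"
  unfolding Aut_def using bij_comp by fastforce
lemma aut_id: "id \<in> Aut E" unfolding Aut_def by simp
lemma aut_inv_l: "g \<in> Aut E \<Longrightarrow> inv g \<circ> g = id" by (rule inv_o_cancel[OF bij_is_inj[OF aut_bij]])
lemma aut_inv_r: "g \<in> Aut E \<Longrightarrow> g \<circ> inv g = id" by (rule surj_iff[THEN iffD1, OF bij_is_surj[OF aut_bij]])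

lemma aut_ray: "g \<in> Aut E \<Longrightarrow> is_ray E r \<Longrightarrow> is_ray E (g \<circ> r)"
proof -
  assume g: "g \<in> Aut E" and r: "is_ray E r"
  have i: "inj g" using aut_bij[OF g] bij_is_inj by blast
  show "is_ray E (g \<circ> r)" unfolding is_ray_def
  proof
    fix n
    have "E (r n) (r (Suc n))" "r (n + 2) \<noteq> r n" using r unfolding is_ray_def by auto
    then show "E ((g \<circ> r) n) ((g \<circ> r) (Suc n)) \<and> (g \<circ> r) (n + 2) \<noteq> (g \<circ> r) n"
      using aut_E[OF g] i by (simp add: inj_eq)
  qed
qed

lemma equiv_comp: "ray_equiv r r' \<Longrightarrow> ray_equiv (g \<circ> r) (g \<circ> r')"
  unfolding ray_equiv_def comp_def
proof (elim exE)
  fix k l assume "\<forall>i. r (i + k) = r' (i + l)"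
  then have "\<forall>i. g (r (i + k)) = g (r' (i + l))" by simp
  then show "\<exists>k l. \<forall>i. g (r (i + k)) = g (r' (i + l))" by blast
qed

lemma bact_cls: assumes g: "g \<in> Aut E" and r: "is_ray E r" shows "bact g (cls r) = cls (g \<circ> r)"
proof
  show "bact g (cls r) \<subseteq> cls (g \<circ> r)"
    unfolding bact_def cls_def using aut_ray[OF g] equiv_comp by blast
  show "cls (g \<circ> r) \<subseteq> bact g (cls r)"
  proof
    fix s assume s: "s \<in> cls (g \<circ> r)"
    have "is_ray E (inv g \<circ> s)" using aut_ray[OF aut_inv[OF g]] s cls_def by blast
    moreover have "ray_equiv (inv g \<circ> (g \<circ> r)) (inv g \<circ> s)" using equiv_comp s cls_def by blast
    moreover have "inv g \<circ> (g \<circ> r) = r" using aut_inv_l[OF g] by (simp add: o_assoc)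
    moreover have "s = g \<circ> (inv g \<circ> s)" using aut_inv_r[OF g] by (simp add: o_assoc)
    ultimately show "s \<in> bact g (cls r)" unfolding bact_def cls_def by auto
  qed
qed

lemma bact_bd: assumes "g \<in> Aut E" "\<omega> \<in> boundary E" shows "bact g \<omega> \<in> boundary E"
proof -
  obtain r where "is_ray E r" "\<omega> = cls r" using bd_cls assms(2) by blast
  then show ?thesis using bact_cls[OF assms(1)] cls_bd aut_ray[OF assms(1)] by simp
qed

lemma bact_mem: "\<rho> \<in> \<omega> \<Longrightarrow> g \<circ> \<rho> \<in> bact g \<omega>" unfolding bact_def by blast

lemma rf_bact: "g \<in> Aut E \<Longrightarrow> \<omega> \<in> boundary E \<Longrightarrow> ray_from (g x) (bact g \<omega>) = g \<circ> ray_from x \<omega>"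
  using ray_from_eq[OF bact_bd bact_mem[OF ray_from(1)]] ray_from(2) by simp

lemma bact_comp: "bact (f \<circ> g) \<omega> = bact f (bact g \<omega>)"
  unfolding bact_def by (auto simp: image_image o_assoc)
lemma bact_id: "bact id \<omega> = \<omega>" unfolding bact_def by simp

lemma horo_cocycle:
  assumes g: "g \<in> Aut E" and w: "\<omega> \<in> boundary E"
  shows "horo E o' (g x) (bact g \<omega>) = horo E o' x \<omega> + horo E o' (g o') (bact g \<omega>)"
proof -
  have w': "bact g \<omega> \<in> boundary E" using bact_bd[OF g w] .
  obtain k l where kl: "\<forall>i. ray_from o' \<omega> (i + k) = ray_from x \<omega> (i + l)"
    using bd_equiv[OF w ray_from(1)[OF w] ray_from(1)[OF w]] unfolding ray_equiv_def by blast
  obtain m n where mn: "\<forall>i. ray_from o' (bact g \<omega>) (i + m) = ray_from (g o') (bact g \<omega>) (i + n)"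
    using bd_equiv[OF w' ray_from(1)[OF w'] ray_from(1)[OF w']] unfolding ray_equiv_def by blast
  have h1: "horo E o' x \<omega> = int k - int l" using horo_eq[OF w kl] .
  have h2: "horo E o' (g o') (bact g \<omega>) = int m - int n" using horo_eq[OF w' mn] .
  have "\<forall>i. ray_from o' (bact g \<omega>) (i + (m + k)) = ray_from (g x) (bact g \<omega>) (i + (l + n))"
  proof
    fix i
    have "ray_from o' (bact g \<omega>) (i + (m + k)) = ray_from (g o') (bact g \<omega>) ((i + k) + n)"
      using mn[rule_format, of "i + k"] by (simp add: ac_simps)
    also have "\<dots> = g (ray_from x \<omega> ((i + n) + l))"
      using rf_bact[OF g w] kl[rule_format, of "i + n"] by (simp add: ac_simps)
    also have "\<dots> = ray_from (g x) (bact g \<omega>) (i + (l + n))"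
      using rf_bact[OF g w] by (simp add: ac_simps)
    finally show "ray_from o' (bact g \<omega>) (i + (m + k)) = ray_from (g x) (bact g \<omega>) (i + (l + n))" .
  qed
  from horo_eq[OF w' this] h1 h2 show ?thesis by simp
qed

end

lemma bij_pair:
  assumes "finite A" "finite B" "card A = card B" "x \<in> A" "y \<in> B"
  shows "\<exists>\<beta>. bij_betw \<beta> A B \<and> \<beta> x = y"
proof -
  have "card (A - {x}) = card (B - {y})" using assms by simp
  then obtain h where h: "bij_betw h (A - {x}) (B - {y})"
    using finite_same_card_bij[of "A - {x}" "B - {y}"] assms(1,2) by blast
  define \<beta> where "\<beta> = h(x := y)"
  have "bij_betw \<beta> (A - {x}) (B - {y}) = bij_betw h (A - {x}) (B - {y})"
    by (rule bij_betw_cong) (simp add: \<beta>_def)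
  then have "bij_betw \<beta> (A - {x}) (B - {y})" using h by simp
  then have "bij_betw \<beta> ((A - {x}) \<union> {x}) ((B - {y}) \<union> {\<beta> x})"
    using notIn_Un_bij_betw3[of x "A - {x}" \<beta> "B - {y}"] unfolding \<beta>_def by simp
  moreover have "(A - {x}) \<union> {x} = A" using assms by auto
  moreover have "\<beta> x = y" unfolding \<beta>_def by simp
  moreover have "(B - {y}) \<union> {y} = B" using assms by auto
  ultimately show ?thesis by metis
qed

lemma (in tree) nbw_extend:
  assumes p: "nbw p n" and e: "E (p n) y" and nb: "n \<ge> 1 \<Longrightarrow> p (n - 1) \<noteq> y"
  shows "nbw (\<lambda>i. if i \<le> n then p i else y) (Suc n)"
  unfolding nbw_def walk_def nonbacktracking_def
proof (intro conjI allI impI)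
  fix i assume i: "i < Suc n"
  show "E (if i \<le> n then p i else y) (if Suc i \<le> n then p (Suc i) else y)"
  proof (cases "i = n")
    case True then show ?thesis using e by simp
  next
    case False
    then have "i < n" using i by simp
    then have "E (p i) (p (Suc i))" using p unfolding nbw_def walk_def by blast
    then show ?thesis using \<open>i < n\<close> by simp
  qed
next
  fix i assume i: "i + 2 \<le> Suc n"
  show "(if i + 2 \<le> n then p (i + 2) else y) \<noteq> (if i \<le> n then p i else y)"
  proof (cases "i + 2 \<le> n")
    case True
    then have "p (i + 2) \<noteq> p i" using p unfolding nbw_def nonbacktracking_def by blast
    then show ?thesis using True by simp
  next
    case False
    then have "i = n - 1" "n \<ge> 1" using i by auto
    then show ?thesis using nb False by auto
  qed
qed

context tree begin

context fixes o' :: 'v begin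

abbreviation "dd v \<equiv> tdist E o' v"

lemma dd_zero: "dd v = 0 \<longleftrightarrow> v = o'"
proof
  assume "dd v = 0"
  moreover obtain p where "p 0 = o'" "p (dd v) = v" using exists_nbw[of o' v] by blast
  ultimately show "v = o'" by simp
next
  assume "v = o'"
  then show "dd v = 0" using tdist_nbw[of "\<lambda>_. o'" 0] unfolding nbw_def walk_def nonbacktracking_def by simp
qed

lemma dd_o[simp]: "dd o' = 0" using dd_zero by simp

lemma levels: assumes "E x y" shows "dd y = dd x + 1 \<or> dd x = dd y + 1"
proof -
  obtain p where p: "p 0 = o'" "p (dd x) = x" "nbw p (dd x)" using exists_nbw by blast
  define n where "n = dd x"
  have pn: "p n = x" "nbw p n" using p n_def by auto
  show ?thesis
  proof (cases "n \<ge> 1 \<and> p (n - 1) = y")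
    case True
    then have "nbw p (n - 1)" using nbw_sub[OF pn(2), of 0 "n - 1"] by simp
    then have "dd y = n - 1" using tdist_nbw[of p "n - 1"] p(1) True by simp
    then show ?thesis using True n_def by simp
  next
    case False
    define p' where "p' i = (if i \<le> n then p i else y)" for i
    have "nbw p' (Suc n)" unfolding p'_def
    proof (rule nbw_extend[OF pn(2)])
      show "E (p n) y" using pn(1) assms by simp
      show "p (n - 1) \<noteq> y" if "n \<ge> 1" using False that by blast
    qed
    then have "dd y = Suc n" using tdist_nbw[of p' "Suc n"] p(1) unfolding p'_def by simp
    then show ?thesis using n_def by simp
  qed
qed

definition par :: "'v \<Rightarrow> 'v" where "par v = (SOME u. E u v \<and> dd u + 1 = dd v)"

lemma par_ex: assumes "v \<noteq> o'" shows "E (par v) v" "dd (par v) + 1 = dd v"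
proof -
  obtain p where p: "p 0 = o'" "p (dd v) = v" "nbw p (dd v)" using exists_nbw by blast
  have "dd v \<noteq> 0" using assms dd_zero by simp
  then obtain m where m: "dd v = Suc m" using not0_implies_Suc by blast
  have "E (p m) (p (Suc m))" using p(3) m unfolding nbw_def walk_def by simp
  then have e: "E (p m) v" using p(2) m by simp
  have "dd (p m) = m" using tdist_nbw[OF nbw_sub[OF p(3), of 0 m]] p(1) m by simp
  then have "\<exists>u. E u v \<and> dd u + 1 = dd v" using e m by (intro exI[of _ "p m"]) simp
  then have "E (par v) v \<and> dd (par v) + 1 = dd v" unfolding par_def by (rule someI_ex)
  then show "E (par v) v" "dd (par v) + 1 = dd v" by auto
qed

lemma ext_walk:
  assumes "E u v" "dd v = dd u + 1"
  shows "\<exists>p. p 0 = o' \<and> nbw p (dd v) \<and> p (dd v) = v \<and> p (dd u) = u"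
proof -
  obtain p where p: "p 0 = o'" "p (dd u) = u" "nbw p (dd u)" using exists_nbw by blast
  define n where "n = dd u"
  have pn: "p n = u" "nbw p n" using p n_def by auto
  define p' where "p' i = (if i \<le> n then p i else v)" for i
  have "nbw p' (Suc n)" unfolding p'_def
  proof (rule nbw_extend[OF pn(2)])
    show "E (p n) v" using pn assms by simp
    assume "n \<ge> 1"
    have "dd (p (n - 1)) = n - 1" using tdist_nbw[OF nbw_sub[OF pn(2), of 0 "n - 1"]] p(1) by simp
    then show "p (n - 1) \<noteq> v" using assms(2) n_def by auto
  qed
  moreover have "p' 0 = o'" "p' (Suc n) = v" "p' n = u" using pn p(1) unfolding p'_def by auto
  moreover have "dd v = Suc n" using assms(2) n_def by simp
  ultimately show ?thesis using n_def by metis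
qed

lemma par_uniq: assumes "E u v" "dd u + 1 = dd v" shows "par v = u"
proof -
  have v: "v \<noteq> o'" using assms(2) dd_zero by auto
  obtain p where p: "p 0 = o'" "nbw p (dd v)" "p (dd v) = v" "p (dd u) = u" using ext_walk assms by force
  obtain p' where p': "p' 0 = o'" "nbw p' (dd v)" "p' (dd v) = v" "p' (dd (par v)) = par v"
    using ext_walk par_ex[OF v] by force
  have "\<forall>i\<le>dd v. p i = p' i" using nb_unique[OF p(2) p'(2)] p p' by simp
  moreover have du: "dd (par v) = dd u" using assms(2) par_ex(2)[OF v] by simp
  moreover have "dd u \<le> dd v" using assms(2) by simp
  ultimately have "p (dd u) = p' (dd u)" by blast
  then show ?thesis using p(4) p'(4) du by simp
qed

lemma edge_par: "E x y \<longleftrightarrow> (y \<noteq> o' \<and> par y = x) \<or> (x \<noteq> o' \<and> par x = y)"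
proof
  assume e: "E x y"
  show "(y \<noteq> o' \<and> par y = x) \<or> (x \<noteq> o' \<and> par x = y)"
  proof (cases "dd y = dd x + 1")
    case True
    then have "y \<noteq> o'" using dd_zero by auto
    then show ?thesis using par_uniq[OF e] True by simp
  next
    case False
    then have "dd x = dd y + 1" using levels[OF e] by simp
    moreover then have "x \<noteq> o'" using dd_zero by auto
    ultimately show ?thesis using par_uniq[OF symE[OF e]] by simp
  qed
next
  assume "(y \<noteq> o' \<and> par y = x) \<or> (x \<noteq> o' \<and> par x = y)"
  then show "E x y" using par_ex(1) symE by blast
qed

definition ch :: "'v \<Rightarrow> 'v set" where "ch u = {v. E u v \<and> dd v = dd u + 1}"

lemma ch_iff: "v \<in> ch u \<longleftrightarrow> v \<noteq> o' \<and> par v = u"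
proof
  assume "v \<in> ch u"
  then have "E u v" "dd v = dd u + 1" unfolding ch_def by auto
  then show "v \<noteq> o' \<and> par v = u" using par_uniq dd_zero by auto
next
  assume "v \<noteq> o' \<and> par v = u"
  then show "v \<in> ch u" unfolding ch_def using par_ex by auto
qed

lemma ch_fin: "finite (ch u)" unfolding ch_def using deg(1)[of u] by (rule rev_finite_subset) auto

lemma ch_card: "card (ch u) = (if u = o' then q + 1 else q)"
proof (cases "u = o'")
  case True
  have "ch u = {v. E u v}" unfolding ch_def using levels True dd_zero by fastforce
  then show ?thesis using deg True by simp
next
  case False
  have "ch u = {v. E u v} - {par u}"
    unfolding ch_def using levels False par_uniq par_ex symE by fastforce
  moreover have "par u \<in> {v. E u v}" using par_ex[OF False] symE by simp
  ultimately show ?thesis using deg False by simp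
qed

end
end

context tree begin
context fixes o' :: 'v begin

lemma ray_dd: "is_ray E a \<Longrightarrow> a 0 = o' \<Longrightarrow> tdist E o' (a i) = i"
  using ray_tdist0[of a i] by simp

lemma ray_par:
  assumes a: "is_ray E a" "a 0 = o'"
  shows "a (Suc i) \<noteq> o'" "par o' (a (Suc i)) = a i" "a (Suc i) \<in> ch o' (a i)"
proof -
  have d: "tdist E o' (a (Suc i)) = Suc i" "tdist E o' (a i) = i" using ray_dd[OF a] by auto
  then show "a (Suc i) \<noteq> o'" using dd_zero[of o'] by auto
  have "E (a i) (a (Suc i))" using a(1) unfolding is_ray_def by blast
  then show "par o' (a (Suc i)) = a i" using par_uniq d by simp
  then show "a (Suc i) \<in> ch o' (a i)" using ch_iff \<open>a (Suc i) \<noteq> o'\<close> by blast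
qed

definition Phi :: "(nat \<Rightarrow> 'v) \<Rightarrow> (nat \<Rightarrow> 'v) \<Rightarrow> 'v \<Rightarrow> 'v \<Rightarrow> 'v \<Rightarrow> 'v" where
  "Phi a b u u' = (SOME \<beta>. bij_betw \<beta> (ch o' u) (ch o' u') \<and>
      (\<forall>i. u = a i \<and> u' = b i \<longrightarrow> \<beta> (a (Suc i)) = b (Suc i)))"

lemma Phi:
  assumes a: "is_ray E a" "a 0 = o'" and b: "is_ray E b" "b 0 = o'"
    and d: "tdist E o' u = tdist E o' u'"
  shows "bij_betw (Phi a b u u') (ch o' u) (ch o' u')"
    "\<And>i. u = a i \<Longrightarrow> u' = b i \<Longrightarrow> Phi a b u u' (a (Suc i)) = b (Suc i)"
proof -
  have uo: "u = o' \<longleftrightarrow> u' = o'" using d dd_zero by metis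
  have cc: "card (ch o' u) = card (ch o' u')" using ch_card[of o' u] ch_card[of o' u'] uo by simp
  have fin: "finite (ch o' u)" "finite (ch o' u')" using ch_fin by auto
  have "\<exists>\<beta>. bij_betw \<beta> (ch o' u) (ch o' u') \<and> (\<forall>i. u = a i \<and> u' = b i \<longrightarrow> \<beta> (a (Suc i)) = b (Suc i))"
  proof (cases "\<exists>i. u = a i \<and> u' = b i")
    case True
    then obtain i where i: "u = a i" "u' = b i" by blast
    have m1: "a (Suc i) \<in> ch o' u" using ray_par(3)[OF a, of i] i(1) by simp
    have m2: "b (Suc i) \<in> ch o' u'" using ray_par(3)[OF b, of i] i(2) by simp
    obtain \<beta> where \<beta>: "bij_betw \<beta> (ch o' u) (ch o' u')" "\<beta> (a (Suc i)) = b (Suc i)"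
      using bij_pair[OF fin cc m1 m2] by blast
    have "\<forall>j. u = a j \<and> u' = b j \<longrightarrow> \<beta> (a (Suc j)) = b (Suc j)"
    proof (intro allI impI)
      fix j assume "u = a j \<and> u' = b j"
      then have "a j = a i" using i by simp
      then have "j = i" using ray_inj[OF a(1)] by (simp add: inj_eq)
      then show "\<beta> (a (Suc j)) = b (Suc j)" using \<beta>(2) by simp
    qed
    then show ?thesis using \<beta>(1) by blast
  next
    case False
    obtain \<beta> where "bij_betw \<beta> (ch o' u) (ch o' u')" using finite_same_card_bij[OF fin cc] by blast
    then show ?thesis using False by blast
  qed
  then have P: "bij_betw (Phi a b u u') (ch o' u) (ch o' u') \<and>
      (\<forall>i. u = a i \<and> u' = b i \<longrightarrow> Phi a b u u' (a (Suc i)) = b (Suc i))"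
    unfolding Phi_def by (rule someI_ex)
  then show "bij_betw (Phi a b u u') (ch o' u) (ch o' u')" by blast
  fix i assume "u = a i" "u' = b i" then show "Phi a b u u' (a (Suc i)) = b (Suc i)" using P by blast
qed

primrec kf :: "(nat \<Rightarrow> 'v) \<Rightarrow> (nat \<Rightarrow> 'v) \<Rightarrow> nat \<Rightarrow> 'v \<Rightarrow> 'v" where
  "kf a b 0 v = o'"
| "kf a b (Suc n) v = Phi a b (par o' v) (kf a b n (par o' v)) v"

definition kk where "kk a b v = kf a b (tdist E o' v) v"

lemma kk_o: "kk a b o' = o'" unfolding kk_def by simp

lemma kk_step: assumes "v \<noteq> o'" shows "kk a b v = Phi a b (par o' v) (kk a b (par o' v)) v"
proof -
  have "tdist E o' v = Suc (tdist E o' (par o' v))" using par_ex(2)[OF assms] by simp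
  then show ?thesis unfolding kk_def by simp
qed

context
  fixes a b assumes a: "is_ray E a" "a 0 = o'" and b: "is_ray E b" "b 0 = o'"
begin

lemma kk_dd_n: "\<forall>v. tdist E o' v = n \<longrightarrow> tdist E o' (kk a b v) = n"
proof (induction n)
  case 0
  then show ?case using dd_zero kk_o by simp
next
  case (Suc n)
  show ?case
  proof (intro allI impI)
    fix v assume v: "tdist E o' v = Suc n"
    then have vo: "v \<noteq> o'" using dd_zero by auto
    define u where "u = par o' v"
    have du: "tdist E o' u = n" using par_ex(2)[OF vo] v u_def by simp
    then have dku: "tdist E o' (kk a b u) = tdist E o' u" using Suc.IH by simp
    have "v \<in> ch o' u" using ch_iff vo u_def by blast
    then have "kk a b v \<in> ch o' (kk a b u)"
      using Phi(1)[OF a b dku[symmetric]] kk_step[OF vo] u_def bij_betwE by fastforce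
    then show "tdist E o' (kk a b v) = Suc n" using dku du unfolding ch_def by simp
  qed
qed

lemma kk_dd: "tdist E o' (kk a b v) = tdist E o' v" using kk_dd_n by blast

lemma kk_Phi_bij: "bij_betw (Phi a b u (kk a b u)) (ch o' u) (ch o' (kk a b u))"
  using Phi(1)[OF a b kk_dd[symmetric]] .

lemma kk_ch: assumes "v \<noteq> o'" shows "kk a b v \<in> ch o' (kk a b (par o' v))"
proof -
  have "v \<in> ch o' (par o' v)" using ch_iff assms by blast
  then show ?thesis using kk_Phi_bij[of "par o' v"] kk_step[OF assms] bij_betwE by fastforce
qed

lemma kk_par: assumes "v \<noteq> o'" shows "kk a b v \<noteq> o'" "par o' (kk a b v) = kk a b (par o' v)"
  using kk_ch[OF assms] ch_iff by blast+

lemma kk_inj_n: "\<forall>v w. tdist E o' v = n \<longrightarrow> kk a b v = kk a b w \<longrightarrow> v = w"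
proof (induction n)
  case 0
  show ?case
  proof (intro allI impI)
    fix v w assume v: "tdist E o' v = 0" and e: "kk a b v = kk a b w"
    have "tdist E o' w = 0" using kk_dd[of v] kk_dd[of w] e v by simp
    then show "v = w" using v dd_zero by simp
  qed
next
  case (Suc n)
  show ?case
  proof (intro allI impI)
    fix v w assume v: "tdist E o' v = Suc n" and e: "kk a b v = kk a b w"
    have w: "tdist E o' w = Suc n" using kk_dd[of v] kk_dd[of w] e v by simp
    have vo: "v \<noteq> o'" and wo: "w \<noteq> o'" using v w dd_zero by auto
    have "kk a b (par o' v) = kk a b (par o' w)" using kk_par(2)[OF vo] kk_par(2)[OF wo] e by simp
    moreover have "tdist E o' (par o' v) = n" using par_ex(2)[OF vo] v by simp
    ultimately have pp: "par o' v = par o' w" using Suc.IH by blast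
    define u where "u = par o' v"
    have "v \<in> ch o' u" "w \<in> ch o' u" using ch_iff vo wo pp u_def by auto
    moreover have "Phi a b u (kk a b u) v = Phi a b u (kk a b u) w"
      using kk_step[OF vo] kk_step[OF wo] e pp u_def by simp
    ultimately show "v = w" using kk_Phi_bij[of u] unfolding bij_betw_def inj_on_def by blast
  qed
qed

lemma kk_inj: "inj (kk a b)"
proof (rule injI)
  fix v w assume "kk a b v = kk a b w"
  then show "v = w" using kk_inj_n[of "tdist E o' v"] by blast
qed

lemma kk_surj_n: "\<forall>w. tdist E o' w = n \<longrightarrow> (\<exists>v. kk a b v = w)"
proof (induction n)
  case 0
  show ?case
  proof (intro allI impI)
    fix w assume "tdist E o' w = 0"
    then have "w = o'" using dd_zero by simp
    then show "\<exists>v. kk a b v = w" using kk_o by blast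
  qed
next
  case (Suc n)
  show ?case
  proof (intro allI impI)
    fix w assume w: "tdist E o' w = Suc n"
    then have wo: "w \<noteq> o'" using dd_zero by auto
    have "tdist E o' (par o' w) = n" using par_ex(2)[OF wo] w by simp
    then obtain u where u: "kk a b u = par o' w" using Suc.IH by blast
    have "w \<in> ch o' (kk a b u)" using wo u by (simp add: ch_iff)
    then have "w \<in> Phi a b u (kk a b u) ` ch o' u" using kk_Phi_bij[of u] by (simp add: bij_betw_def)
    then obtain v where v: "v \<in> ch o' u" "Phi a b u (kk a b u) v = w" by blast
    have vv: "v \<noteq> o' \<and> par o' v = u" using v(1) by (simp add: ch_iff)
    then have "kk a b v = Phi a b u (kk a b u) v" using kk_step[of v] by simp
    then have "kk a b v = w" using v(2) by simp
    then show "\<exists>v. kk a b v = w" by blast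
  qed
qed

lemma kk_surj: "surj (kk a b)"
  unfolding surj_def
proof
  fix w
  obtain v where "kk a b v = w" using kk_surj_n[of "tdist E o' w"] by blast
  then show "\<exists>v. w = kk a b v" by metis
qed

lemma kk_E: "E x y \<longleftrightarrow> E (kk a b x) (kk a b y)"
proof
  assume "E x y"
  then consider "y \<noteq> o' \<and> par o' y = x" | "x \<noteq> o' \<and> par o' x = y" using edge_par by blast
  then show "E (kk a b x) (kk a b y)"
  proof cases
    case 1
    then have "kk a b y \<noteq> o' \<and> par o' (kk a b y) = kk a b x" using kk_par[of y] by simp
    then show ?thesis using edge_par by blast
  next
    case 2
    then have "kk a b x \<noteq> o' \<and> par o' (kk a b x) = kk a b y" using kk_par[of x] by simp
    then show ?thesis using edge_par by blast
  qed
next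
  assume "E (kk a b x) (kk a b y)"
  then consider "kk a b y \<noteq> o' \<and> par o' (kk a b y) = kk a b x"
    | "kk a b x \<noteq> o' \<and> par o' (kk a b x) = kk a b y" using edge_par by blast
  then show "E x y"
  proof cases
    case 1
    then have yo: "y \<noteq> o'" using kk_o by auto
    then have "kk a b (par o' y) = kk a b x" using 1 kk_par(2) by simp
    then have "par o' y = x" using kk_inj by (simp add: inj_eq)
    then show ?thesis using yo edge_par by blast
  next
    case 2
    then have xo: "x \<noteq> o'" using kk_o by auto
    then have "kk a b (par o' x) = kk a b y" using 2 kk_par(2) by simp
    then have "par o' x = y" using kk_inj by (simp add: inj_eq)
    then show ?thesis using xo edge_par by blast
  qed
qed

lemma kk_aut: "kk a b \<in> Aut E"
  unfolding Aut_def using kk_inj kk_surj kk_E bij_def by blast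

lemma kk_ray: "kk a b (a i) = b i"
proof (induction i)
  case 0 then show ?case using a b kk_o by simp
next
  case (Suc i)
  have "kk a b (a (Suc i)) = Phi a b (a i) (kk a b (a i)) (a (Suc i))"
    using kk_step[OF ray_par(1)[OF a]] ray_par(2)[OF a] by simp
  also have "\<dots> = Phi a b (a i) (b i) (a (Suc i))" using Suc by simp
  also have "\<dots> = b (Suc i)"
    using Phi(2)[OF a b, of "a i" "b i" i] ray_dd[OF a] ray_dd[OF b] by simp
  finally show ?case .
qed

end

lemma K_trans:
  assumes w: "\<omega> \<in> boundary E" and w': "\<omega>' \<in> boundary E"
  shows "\<exists>k\<in>Aut E. k o' = o' \<and> bact k \<omega> = \<omega>'"
proof -
  define a where "a = ray_from o' \<omega>"
  define b where "b = ray_from o' \<omega>'"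
  have a: "is_ray E a" "a 0 = o'" "a \<in> \<omega>" using ray_from[OF w] a_def by auto
  have b: "is_ray E b" "b 0 = o'" "b \<in> \<omega>'" using ray_from[OF w'] b_def by auto
  have k: "kk a b \<in> Aut E" "kk a b o' = o'" using kk_aut[OF a(1,2) b(1,2)] kk_o by auto
  have "kk a b \<circ> a = b" using kk_ray[OF a(1,2) b(1,2)] by auto
  then have "b \<in> bact (kk a b) \<omega>" using bact_mem[OF a(3)] by metis
  then have "bact (kk a b) \<omega> = \<omega>'" using bd_inter[OF bact_bd[OF k(1) w] w'] b(3) by blast
  then show ?thesis using k by blast
qed

end
end

lemma funpow_cancel: "(f::'a\<Rightarrow>'a) \<circ> g = id \<Longrightarrow> (f ^^ n) \<circ> (g ^^ n) = id"
proof (induction n)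
  case 0 show ?case by (rule ext) simp
next
  case (Suc n)
  have fg: "f (g y) = y" for y using Suc.prems by (metis comp_apply id_apply)
  have ih: "(f ^^ n) ((g ^^ n) y) = y" for y using Suc.IH[OF Suc.prems] by (metis comp_apply id_apply)
  show ?case
  proof (rule ext)
    fix x
    have "(f ^^ Suc n) ((g ^^ Suc n) x) = (f ^^ n) (f (g ((g ^^ n) x)))" by (simp add: funpow_swap1)
    then show "((f ^^ Suc n) \<circ> (g ^^ Suc n)) x = id x" using fg ih by simp
  qed
qed

lemma ipow_cancel:
  assumes "bij t" shows "ipow t (- j) \<circ> ipow t j = id"
proof -
  have l: "inv t \<circ> t = id" using assms bij_is_inj inv_o_cancel by blast
  have r: "t \<circ> inv t = id" using assms bij_is_surj surj_iff by blast
  show ?thesis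
  proof (cases "j \<ge> 0")
    case True
    then show ?thesis
    proof (cases "j = 0")
      case True then show ?thesis unfolding ipow_def by simp
    next
      case False
      then have "ipow t (- j) = inv t ^^ nat j" "ipow t j = t ^^ nat j" using True unfolding ipow_def by auto
      then show ?thesis using funpow_cancel[OF l] by simp
    qed
  next
    case False
    then have "ipow t (- j) = t ^^ nat (- j)" "ipow t j = inv t ^^ nat (- j)" unfolding ipow_def by auto
    then show ?thesis using funpow_cancel[OF r] by simp
  qed
qed

lemma funpow_shift:
  assumes "\<And>i. f (p i) = p (i + 1)" shows "(f ^^ n) (p i) = p (i + int n)"
proof (induction n)
  case 0 then show ?case by simp
next
  case (Suc n)
  have "(f ^^ Suc n) (p i) = f (p (i + int n))" using Suc by simp
  also have "\<dots> = p (i + int (Suc n))" using assms by (simp add: algebra_simps)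
  finally show ?case .
qed

lemma ipow_shift:
  assumes b: "bij t" and s: "\<And>i. t (p i) = p (i + 1)" shows "ipow t j (p i) = p (i + j)"
proof -
  have s': "\<And>i. inv t (p i) = p (i + (-1))"
  proof -
    fix i
    have "t (p (i + (-1))) = p i" using s[of "i + (-1)"] by simp
    then show "inv t (p i) = p (i + (-1))" using b bij_is_inj inv_f_eq by metis
  qed
  show ?thesis
  proof (cases "j \<ge> 0")
    case True
    then show ?thesis unfolding ipow_def using funpow_shift[of t p, OF s, of "nat j" i] by simp
  next
    case False
    have "(inv t ^^ n) (p i) = p (i - int n)" for n
      by (induction n) (auto simp: s' algebra_simps)
    then show ?thesis unfolding ipow_def using False by simp
  qed
qed

context tree begin

lemma funpow_aut: "f \<in> Aut E \<Longrightarrow> f ^^ n \<in> Aut E"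
  by (induction n) (auto simp: aut_id aut_comp)

lemma ipow_aut: "t \<in> Aut E \<Longrightarrow> ipow t j \<in> Aut E"
  unfolding ipow_def using funpow_aut aut_inv by auto

lemma bact_funpow: "bact f \<omega> = \<omega> \<Longrightarrow> bact (f ^^ n) \<omega> = \<omega>"
  by (induction n) (auto simp: bact_id bact_comp)

lemma bact_ipow:
  assumes t: "t \<in> Aut E" and f: "bact t \<omega> = \<omega>" shows "bact (ipow t j) \<omega> = \<omega>"
proof -
  have "bact (inv t) \<omega> = bact (inv t) (bact t \<omega>)" using f by simp
  also have "\<dots> = \<omega>" using aut_inv_l[OF t] by (simp add: bact_comp[symmetric] bact_id)
  finally have "bact (inv t) \<omega> = \<omega>" .
  then show ?thesis unfolding ipow_def using bact_funpow[of t \<omega>] bact_funpow[of "inv t" \<omega>] f by simp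
qed

lemma horo_K: assumes k: "k \<in> Aut E" "k o' = o'" and w: "\<omega> \<in> boundary E"
  shows "horo E o' (k y) (bact k \<omega>) = horo E o' y \<omega>"
  using horo_cocycle[OF k(1) w, of o' y] k(2) horo_self[OF bact_bd[OF k(1) w]] by simp

lemma horo_fix0: assumes n: "n \<in> Aut E" "n x0 = x0" and w: "\<omega> \<in> boundary E" "bact n \<omega> = \<omega>"
  shows "horo E o' (n o') \<omega> = 0"
  using horo_cocycle[OF n(1) w(1), of o' x0] n(2) w(2) by simp

lemma fix_from_horo: assumes n: "n \<in> Aut E" and w: "\<omega> \<in> boundary E" "bact n \<omega> = \<omega>"
  and h: "horo E o' (n o') \<omega> = 0" shows "\<exists>x. n x = x"
proof -
  define a where "a = ray_from o' \<omega>"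
  have na: "ray_from (n o') \<omega> = n \<circ> a" using rf_bact[OF n w(1), of o'] w(2) a_def by simp
  obtain k l where kl: "\<forall>i. a (i + k) = ray_from (n o') \<omega> (i + l)"
    using bd_equiv[OF w(1) ray_from(1)[OF w(1)] ray_from(1)[OF w(1)]] a_def unfolding ray_equiv_def by blast
  have "int k - int l = 0" using horo_eq[OF w(1)] kl h a_def by metis
  then have "k = l" by simp
  then have "a k = n (a k)" using kl[rule_format, of 0] na by simp
  then show ?thesis by metis
qed

end

locale setting = tree E q for E :: "'v \<Rightarrow> 'v \<Rightarrow> bool" and q +
  fixes o' :: 'v and \<omega>m \<omega>p :: "(nat \<Rightarrow> 'v) set" and t r :: "'v \<Rightarrow> 'v"
  assumes SS: "standard_setting q E o' \<omega>m \<omega>p t r"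
begin

lemma S: "\<omega>m \<in> boundary E" "\<omega>p \<in> boundary E" "o' \<in> geodesic E \<omega>m \<omega>p"
  "t \<in> Aut E" "bact t \<omega>m = \<omega>m" "bact t \<omega>p = \<omega>p"
  "\<And>x. x \<in> geodesic E \<omega>m \<omega>p \<Longrightarrow> E x (t x) \<and> t x \<in> range (ray_from x \<omega>p)"
  "r \<in> Aut E" "r o' = o'" "\<And>j. r \<circ> ipow t j \<circ> inv r = ipow t (- j)"
  using SS unfolding standard_setting_def Kgrp_def by auto

end

context tree begin

lemma int_ray:
  assumes p: "\<forall>i. E (p i) (p (i + 1)) \<and> p (i + 2) \<noteq> p i"
  shows "is_ray E (\<lambda>n. p (i + int n))" "is_ray E (\<lambda>n. p (i - int n))"
proof -
  show "is_ray E (\<lambda>n. p (i + int n))" unfolding is_ray_def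
  proof
    fix n
    have "E (p (i + int n)) (p (i + int n + 1))" "p (i + int n + 2) \<noteq> p (i + int n)" using p by auto
    then show "E (p (i + int n)) (p (i + int (Suc n))) \<and> p (i + int (n + 2)) \<noteq> p (i + int n)"
      by (simp add: algebra_simps)
  qed
  show "is_ray E (\<lambda>n. p (i - int n))" unfolding is_ray_def
  proof
    fix n
    have "E (p (i - int n - 1)) (p (i - int n - 1 + 1))" "p (i - int n - 2 + 2) \<noteq> p (i - int n - 2)" using p by blast+
    then have "E (p (i - int n - 1)) (p (i - int n))" "p (i - int n) \<noteq> p (i - int n - 2)" by simp_all
    then show "E (p (i - int n)) (p (i - int (Suc n))) \<and> p (i - int (n + 2)) \<noteq> p (i - int n)"
      using symE by (simp add: algebra_simps)
  qed
qed

lemma adj_tdist: "E x y \<Longrightarrow> tdist E x y = 1"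
proof -
  assume e: "E x y"
  have "nbw (\<lambda>k. if k = 0 then x else y) 1" unfolding nbw_def walk_def nonbacktracking_def using e by auto
  from tdist_nbw[OF this] show ?thesis by simp
qed

end

context setting begin

definition gp :: "int \<Rightarrow> 'v" where
  "gp = (SOME p. (\<forall>i. E (p i) (p (i + 1)) \<and> p (i + 2) \<noteq> p i) \<and>
      (\<lambda>n. p (int n)) \<in> \<omega>p \<and> (\<lambda>n. p (- int n)) \<in> \<omega>m \<and> o' \<in> range p)"

lemma gp: "\<forall>i. E (gp i) (gp (i + 1)) \<and> gp (i + 2) \<noteq> gp i"
  "(\<lambda>n. gp (int n)) \<in> \<omega>p" "(\<lambda>n. gp (- int n)) \<in> \<omega>m" "o' \<in> range gp"
proof -
  have "\<exists>p. (\<forall>i. E (p i) (p (i + 1)) \<and> p (i + 2) \<noteq> p i) \<and>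
      (\<lambda>n. p (int n)) \<in> \<omega>p \<and> (\<lambda>n. p (- int n)) \<in> \<omega>m \<and> o' \<in> range p"
    using S(3) unfolding geodesic_def by blast
  then have "(\<forall>i. E (gp i) (gp (i + 1)) \<and> gp (i + 2) \<noteq> gp i) \<and>
      (\<lambda>n. gp (int n)) \<in> \<omega>p \<and> (\<lambda>n. gp (- int n)) \<in> \<omega>m \<and> o' \<in> range gp"
    unfolding gp_def by (rule someI_ex)
  then show "\<forall>i. E (gp i) (gp (i + 1)) \<and> gp (i + 2) \<noteq> gp i"
  "(\<lambda>n. gp (int n)) \<in> \<omega>p" "(\<lambda>n. gp (- int n)) \<in> \<omega>m" "o' \<in> range gp" by auto
qed

lemma gp_geo: "gp i \<in> geodesic E \<omega>m \<omega>p"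
  unfolding geodesic_def using gp(1-3) by blast

lemma rf_gp_p: "ray_from (gp i) \<omega>p = (\<lambda>n. gp (i + int n))"
proof (rule ray_from_eq[OF S(2)])
  have R: "is_ray E (\<lambda>n. gp (i + int n))" using int_ray(1)[OF gp(1)] .
  have "ray_equiv (\<lambda>n. gp (int n)) (\<lambda>n. gp (i + int n))"
    unfolding ray_equiv_def
  proof (cases "i \<ge> 0")
    case True
    have "\<forall>n. gp (int (n + nat i)) = gp (i + int (n + 0))" using True by (simp add: algebra_simps)
    then show "\<exists>k l. \<forall>n. gp (int (n + k)) = gp (i + int (n + l))" by blast
  next
    case False
    have "\<forall>n. gp (int (n + 0)) = gp (i + int (n + nat (- i)))" using False by (simp add: algebra_simps)
    then show "\<exists>k l. \<forall>n. gp (int (n + k)) = gp (i + int (n + l))" by blast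
  qed
  then show "(\<lambda>n. gp (i + int n)) \<in> \<omega>p" using bd_mem[OF S(2) gp(2) R] by blast
  show "gp (i + int 0) = gp i" by simp
qed

lemma rf_gp_m: "ray_from (gp i) \<omega>m = (\<lambda>n. gp (i - int n))"
proof (rule ray_from_eq[OF S(1)])
  have R: "is_ray E (\<lambda>n. gp (i - int n))" using int_ray(2)[OF gp(1)] .
  have "ray_equiv (\<lambda>n. gp (- int n)) (\<lambda>n. gp (i - int n))"
    unfolding ray_equiv_def
  proof (cases "i \<le> 0")
    case True
    have "\<forall>n. gp (- int (n + nat (- i))) = gp (i - int (n + 0))" using True by (simp add: algebra_simps)
    then show "\<exists>k l. \<forall>n. gp (- int (n + k)) = gp (i - int (n + l))" by blast
  next
    case False
    have "\<forall>n. gp (- int (n + 0)) = gp (i - int (n + nat i))" using False by (simp add: algebra_simps)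
    then show "\<exists>k l. \<forall>n. gp (- int (n + k)) = gp (i - int (n + l))" by blast
  qed
  then show "(\<lambda>n. gp (i - int n)) \<in> \<omega>m" using bd_mem[OF S(1) gp(3) R] by blast
  show "gp (i - int 0) = gp i" by simp
qed

lemma t_gp: "t (gp i) = gp (i + 1)"
proof -
  have h: "E (gp i) (t (gp i))" "t (gp i) \<in> range (ray_from (gp i) \<omega>p)" using S(7)[OF gp_geo] by auto
  then obtain m where m: "t (gp i) = gp (i + int m)" using rf_gp_p by auto
  have "tdist E (gp i) (gp (i + int m)) = m"
    using ray_tdist0[OF int_ray(1)[OF gp(1)], of i m] by simp
  moreover have "tdist E (gp i) (t (gp i)) = 1" using adj_tdist h(1) by simp
  ultimately have "m = 1" using m by simp
  then show ?thesis using m by simp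
qed

lemma ipow_gp: "ipow t j (gp i) = gp (i + j)"
  using ipow_shift[where p=gp, OF aut_bij[OF S(4)] t_gp] .

definition m0 where "m0 = (SOME m. o' = gp m)"
lemma m0: "gp m0 = o'" using gp(4) unfolding m0_def by (metis (mono_tags) rangeE someI_ex)

lemma r_comm: "r \<circ> ipow t j = ipow t (- j) \<circ> r"
proof -
  have "r \<circ> ipow t j = r \<circ> ipow t j \<circ> (inv r \<circ> r)" using aut_inv_l[OF S(8)] by simp
  also have "\<dots> = (r \<circ> ipow t j \<circ> inv r) \<circ> r" by (simp add: o_assoc)
  also have "\<dots> = ipow t (- j) \<circ> r" using S(10) by simp
  finally show ?thesis .
qed

lemma bact_r: "bact r \<omega>p = \<omega>m"
proof -
  have "r \<circ> ray_from o' \<omega>p = ray_from o' \<omega>m"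
  proof
    fix n
    have "(r \<circ> ray_from o' \<omega>p) n = r (ipow t (int n) (gp m0))"
      using rf_gp_p[of m0] m0 ipow_gp[of "int n" m0] by simp
    also have "\<dots> = ipow t (- int n) (r (gp m0))" using fun_cong[OF r_comm[of "int n"]] by simp
    also have "\<dots> = ipow t (- int n) (gp m0)" using m0 S(9) by simp
    also have "\<dots> = gp (m0 - int n)" using ipow_gp[of "- int n" m0] by simp
    also have "\<dots> = ray_from o' \<omega>m n" using rf_gp_m[of m0] m0 by simp
    finally show "(r \<circ> ray_from o' \<omega>p) n = ray_from o' \<omega>m n" .
  qed
  then have "ray_from o' \<omega>m \<in> bact r \<omega>p" using bact_mem[OF ray_from(1)[OF S(2)]] by metis
  then show ?thesis using bd_inter[OF bact_bd[OF S(8) S(2)] S(1)] ray_from(1)[OF S(1)] by blast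
qed

lemma horo_tau: "horo E o' (ipow t j o') \<omega>p = j"
proof -
  have e: "ipow t j o' = gp (m0 + j)" using ipow_gp m0 by metis
  have a: "ray_from o' \<omega>p = (\<lambda>n. gp (m0 + int n))" using rf_gp_p m0 by metis
  have b: "ray_from (gp (m0 + j)) \<omega>p = (\<lambda>n. gp (m0 + j + int n))" using rf_gp_p by metis
  show ?thesis
  proof (cases "j \<ge> 0")
    case True
    have "\<forall>n. ray_from o' \<omega>p (n + nat j) = ray_from (gp (m0 + j)) \<omega>p (n + 0)"
      using a b True by (simp add: algebra_simps)
    from horo_eq[OF S(2) this] show ?thesis using e True by simp
  next
    case False
    have "\<forall>n. ray_from o' \<omega>p (n + 0) = ray_from (gp (m0 + j)) \<omega>p (n + nat (- j))"
      using a b False by (simp add: algebra_simps)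
    from horo_eq[OF S(2) this] show ?thesis using e False by simp
  qed
qed

lemma Hfun_char:
  assumes g: "g \<in> Aut E"
  shows "Hfun E o' \<omega>p t g = horo E o' (g o') (bact g \<omega>p)"
proof -
  define J where "J = horo E o' (g o') (bact g \<omega>p)"
  have gw: "bact g \<omega>p \<in> boundary E" using bact_bd[OF g S(2)] .
  have uniq: "j = J" if a1: "k \<in> Kgrp E o'" and a2: "n \<in> Bgrp E \<omega>p" and a3: "g = k \<circ> n \<circ> ipow t j" for k n j
  proof -
    have k: "k \<in> Aut E" "k o' = o'" using a1 unfolding Kgrp_def by auto
    obtain x0 where n: "n \<in> Aut E" "bact n \<omega>p = \<omega>p" "n x0 = x0" using a2 unfolding Bgrp_def by auto
    have bt: "bact (ipow t j) \<omega>p = \<omega>p" using bact_ipow[OF S(4) S(6)] .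
    have "bact g \<omega>p = bact k \<omega>p" using a3 n(2) bt by (simp add: bact_comp)
    then have "J = horo E o' (k (n (ipow t j o'))) (bact k \<omega>p)" using a3 J_def by simp
    also have "\<dots> = horo E o' (n (ipow t j o')) \<omega>p" using horo_K[OF k S(2)] by simp
    also have "\<dots> = horo E o' (n (ipow t j o')) (bact n \<omega>p)" using n(2) by simp
    also have "\<dots> = horo E o' (ipow t j o') \<omega>p + horo E o' (n o') (bact n \<omega>p)"
      using horo_cocycle[OF n(1) S(2), of o' "ipow t j o'"] by simp
    also have "\<dots> = horo E o' (ipow t j o') \<omega>p + horo E o' (n o') \<omega>p" using n(2) by simp
    also have "\<dots> = j" using horo_tau[of j] horo_fix0[OF n(1) n(3) S(2) n(2), of o'] by simp
    finally show ?thesis by simp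
  qed
  obtain k where k: "k \<in> Aut E" "k o' = o'" "bact k \<omega>p = bact g \<omega>p" using K_trans[OF S(2) gw] by blast
  define n where "n = inv k \<circ> g \<circ> ipow t (- J)"
  have ik1: "inv k \<in> Aut E" using aut_inv[OF k(1)] .
  have "inv k o' = o'" using inv_f_eq[OF bij_is_inj[OF aut_bij[OF k(1)]] k(2)] .
  note ik = ik1 this
  have nA: "n \<in> Aut E" unfolding n_def by (rule aut_comp[OF aut_comp[OF ik(1) g] ipow_aut[OF S(4)]])
  have bk: "bact (inv k) (bact g \<omega>p) = \<omega>p"
    using aut_inv_l[OF k(1)] k(3)[symmetric] by (simp add: bact_comp[symmetric] bact_id)
  have bn: "bact n \<omega>p = \<omega>p"
  proof -
    have "bact n \<omega>p = bact (inv k) (bact g (bact (ipow t (- J)) \<omega>p))" unfolding n_def by (simp add: bact_comp)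
    also have "\<dots> = bact (inv k) (bact k \<omega>p)" using bact_ipow[OF S(4) S(6)] k(3) by simp
    also have "\<dots> = \<omega>p" using aut_inv_l[OF k(1)] by (simp add: bact_comp[symmetric] bact_id)
    finally show ?thesis .
  qed
  have hn: "horo E o' (n o') \<omega>p = 0"
  proof -
    define y where "y = ipow t (- J) o'"
    have "horo E o' (n o') \<omega>p = horo E o' (inv k (g y)) (bact (inv k) (bact g \<omega>p))"
      using bk unfolding n_def y_def by simp
    also have "\<dots> = horo E o' (g y) (bact g \<omega>p)" using horo_K[OF ik gw] by simp
    also have "\<dots> = horo E o' y \<omega>p + J" using horo_cocycle[OF g S(2), of o' y] J_def by simp
    also have "\<dots> = 0" using horo_tau y_def by simp
    finally show ?thesis .
  qed
  obtain x where "n x = x" using fix_from_horo[OF nA S(2) bn hn] by blast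
  then have nB: "n \<in> Bgrp E \<omega>p" unfolding Bgrp_def using nA bn by blast
  have kK: "k \<in> Kgrp E o'" unfolding Kgrp_def using k by blast
  have "k \<circ> n \<circ> ipow t J = (k \<circ> inv k) \<circ> g \<circ> (ipow t (- J) \<circ> ipow t J)" unfolding n_def by (simp add: o_assoc)
  also have "\<dots> = g" using aut_inv_r[OF k(1)] ipow_cancel[OF aut_bij[OF S(4)]] by simp
  finally have ex: "g = k \<circ> n \<circ> ipow t J" by simp
  show ?thesis unfolding Hfun_def J_def[symmetric]
  proof (rule the_equality)
    show "\<exists>k\<in>Kgrp E o'. \<exists>n\<in>Bgrp E \<omega>p. g = k \<circ> n \<circ> ipow t J" using kK nB ex by blast
    fix j assume "\<exists>k\<in>Kgrp E o'. \<exists>n\<in>Bgrp E \<omega>p. g = k \<circ> n \<circ> ipow t j"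
    then show "j = J" using uniq by blast
  qed
qed

end

context setting begin

lemma H_left:
  assumes c: "c \<in> Aut E" and y: "y \<in> Aut E"
  shows "Hfun E o' \<omega>p t (c \<circ> y) = Hfun E o' \<omega>p t y + horo E o' (c o') (bact (c \<circ> y) \<omega>p)"
proof -
  have yw: "bact y \<omega>p \<in> boundary E" using bact_bd[OF y S(2)] .
  have "Hfun E o' \<omega>p t (c \<circ> y) = horo E o' (c (y o')) (bact c (bact y \<omega>p))"
    using Hfun_char[OF aut_comp[OF c y]] by (simp add: bact_comp)
  also have "\<dots> = horo E o' (y o') (bact y \<omega>p) + horo E o' (c o') (bact c (bact y \<omega>p))"
    by (rule horo_cocycle[OF c yw])
  also have "\<dots> = Hfun E o' \<omega>p t y + horo E o' (c o') (bact (c \<circ> y) \<omega>p)"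
    using Hfun_char[OF y] by (simp add: bact_comp)
  finally show ?thesis .
qed

lemma powr_split:
  "(x::complex) powr (c * of_int (a + b)) = x powr (c * of_int a) * x powr (c * of_int b)"
  by (simp add: distrib_left powr_add)

lemma dfun_rel:
  assumes \<gamma>: "\<gamma> \<in> Aut E" and g: "g \<in> Aut E"
  shows "dfun q E o' \<omega>p t r s s2 (g \<circ> ipow t j) =
    complex_of_real (real q) powr ((1/2 + \<i> * s) * of_int (horo E o' (\<gamma> o') (bact g \<omega>p))) *
    complex_of_real (real q) powr ((1/2 + \<i> * s2) * of_int (horo E o' (\<gamma> o') (bact g \<omega>m))) *
    dfun q E o' \<omega>p t r s s2 ((inv \<gamma> \<circ> g) \<circ> ipow t j)"
proof -
  define x where "x = g \<circ> ipow t j"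
  define h where "h = inv \<gamma> \<circ> x"
  have xA: "x \<in> Aut E" unfolding x_def by (rule aut_comp[OF g ipow_aut[OF S(4)]])
  have hA: "h \<in> Aut E" unfolding h_def by (rule aut_comp[OF aut_inv[OF \<gamma>] xA])
  have hrA: "h \<circ> r \<in> Aut E" by (rule aut_comp[OF hA S(8)])
  have gh: "\<gamma> \<circ> h = x" unfolding h_def using aut_inv_r[OF \<gamma>] by (simp add: o_assoc)
  have ghr: "\<gamma> \<circ> (h \<circ> r) = x \<circ> r" using gh by (simp add: o_assoc)
  have bx: "bact x \<omega>p = bact g \<omega>p" unfolding x_def using bact_ipow[OF S(4) S(6)] by (simp add: bact_comp)
  have bxr: "bact (x \<circ> r) \<omega>p = bact g \<omega>m" unfolding x_def
    using bact_ipow[OF S(4) S(5)] bact_r by (simp add: bact_comp)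
  have H1: "Hfun E o' \<omega>p t x = Hfun E o' \<omega>p t h + horo E o' (\<gamma> o') (bact g \<omega>p)"
    using H_left[OF \<gamma> hA] gh bx by simp
  have H2: "Hfun E o' \<omega>p t (x \<circ> r) = Hfun E o' \<omega>p t (h \<circ> r) + horo E o' (\<gamma> o') (bact g \<omega>m)"
    using H_left[OF \<gamma> hrA] ghr bxr by simp
  have hx: "(inv \<gamma> \<circ> g) \<circ> ipow t j = h" unfolding h_def x_def by (simp add: o_assoc)
  show ?thesis unfolding dfun_def hx x_def[symmetric] H1 H2 powr_split by (simp add: ac_simps)
qed

end

lemma ltrans_coset: "ltrans \<gamma> f (cosetM M x) = f (cosetM M (inv \<gamma> \<circ> x))"
  unfolding ltrans_def cosetM_def by (simp add: image_image o_assoc)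

theorem proposition3p6:
  fixes q :: nat and E :: "'v \<Rightarrow> 'v \<Rightarrow> bool" and o' :: 'v
    and \<omega>m \<omega>p :: "(nat \<Rightarrow> 'v) set" and t r \<gamma> g :: "'v \<Rightarrow> 'v"
    and s s' :: complex and f :: "('v \<Rightarrow> 'v) set \<Rightarrow> complex"
  assumes "standard_setting q E o' \<omega>m \<omega>p t r"
    and "f \<in> Cclc E (Mgrp E o' \<omega>m \<omega>p)"
    and "\<gamma> \<in> Aut E" and "g \<in> Aut E"
  shows "radon q E o' \<omega>m \<omega>p t r s s' (ltrans \<gamma> f) g =
           complex_of_real (real q) powr ((1/2 + \<i> * s) * of_int (horo E o' (\<gamma> o') (bact g \<omega>p))) *
           complex_of_real (real q) powr ((1/2 - \<i> * cnj s') * of_int (horo E o' (\<gamma> o') (bact g \<omega>m))) *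
           radon q E o' \<omega>m \<omega>p t r s s' f (inv \<gamma> \<circ> g)"
proof -
  have RT: "regular_tree E q" using assms(1) unfolding standard_setting_def by blast
  interpret S: setting E q o' \<omega>m \<omega>p t r
    by (unfold_locales) (rule RT, rule assms(1))
  define M where "M = Mgrp E o' \<omega>m \<omega>p"
  define C where "C = complex_of_real (real q) powr ((1/2 + \<i> * s) * of_int (horo E o' (\<gamma> o') (bact g \<omega>p))) *
           complex_of_real (real q) powr ((1/2 - \<i> * cnj s') * of_int (horo E o' (\<gamma> o') (bact g \<omega>m)))"
  have c2: "1/2 + \<i> * (- cnj s') = 1/2 - \<i> * cnj s'" by simp
  have tm: "ltrans \<gamma> f (cosetM M (g \<circ> ipow t j)) * dfun q E o' \<omega>p t r s (- cnj s') (g \<circ> ipow t j) =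
     C * (f (cosetM M ((inv \<gamma> \<circ> g) \<circ> ipow t j)) * dfun q E o' \<omega>p t r s (- cnj s') ((inv \<gamma> \<circ> g) \<circ> ipow t j))"
    for j
    using S.dfun_rel[OF assms(3) assms(4), of s "- cnj s'" j] ltrans_coset[of \<gamma> f M "g \<circ> ipow t j"]
    unfolding C_def c2 by (simp add: o_assoc ac_simps)
  show ?thesis
    unfolding radon_def M_def[symmetric] C_def[symmetric] tm
    by (rule infsum_cmult_right')
qed


end
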